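(* Let $H$ be an abelian group with an alternating $\mathbb{Z}$-bilinear form $\langle-,-\rangle$, and let $z\in H\setminus\ker\mu$. Then $H_2(\mathbb{Q}[H])_{(z)}=0$.
   Context: $\mu:H\to\mathrm{Hom}_{\mathbb{Z}}(H,\mathbb{Z})$, $\mu(x)(y)=\langle x,y\rangle$. $\mathbb{Q}[H]$ is the $\mathbb{Q}$-vector space with basis symbols $[x]$, $x\in H$, with Lie bracket $[[x],[y]]=\langle x,y\rangle[x+y]$. Chevalley–Eilenberg complex $C_p(\mathbb{Q}[H])=\bigwedge^p_{\mathbb{Q}}\mathbb{Q}[H]$, $\partial(x_1\wedge\cdots\wedge x_p)=\sum_{i<j}(-1)^{i+j}[x_i,x_j]\wedge x_1\wedge\cdots\widehat{x_i}\cdots\widehat{x_j}\cdots\wedge x_p$. For $p>0$, $C_p(\mathbb{Q}[H])_{(z)}$ is the span of $[u_1]\wedge\cdots\wedge[u_p]$ with $u_1+\cdots+u_p=z$; it is a subcomplex, and $H_p(\mathbb{Q}[H])_{(z)}$ denotes its homology. *)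

theory Defs
  imports Complex_Main
begin

definition alt_bilinear :: "('a::ab_group_add \<Rightarrow> 'a \<Rightarrow> int) \<Rightarrow> bool" where
  "alt_bilinear B \<longleftrightarrow>
     (\<forall>x y w. B (x + y) w = B x w + B y w) \<and>
     (\<forall>x y w. B x (y + w) = B x y + B x w) \<and>
     (\<forall>x. B x x = 0)"

text \<open>A p-chain of the Chevalley-Eilenberg complex of Q[H] is given by a
 finitely supported coefficient function c on p-tuples, representing the element
 sum of c(u1,...,up) [u1] wedge ... wedge [up] of the exterior power.\<close>

definition supp :: "('b \<Rightarrow> rat) \<Rightarrow> 'b set" where
  "supp c = {p. c p \<noteq> 0}"

text \<open>Two representatives in degree 2 define the same element of the exterior square
 iff their antisymmetrizations agree.\<close>
definition alt2 :: "('a \<times> 'a \<Rightarrow> rat) \<Rightarrow> ('a \<times> 'a \<Rightarrow> rat)" where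
  "alt2 c = (\<lambda>(x, y). c (x, y) - c (y, x))"

text \<open>Boundary C_2 -> C_1: d([x] wedge [y]) = (-1)^(1+2) <x,y> [x+y].\<close>
definition bd2 :: "('a::ab_group_add \<Rightarrow> 'a \<Rightarrow> int) \<Rightarrow> ('a \<times> 'a \<Rightarrow> rat) \<Rightarrow> ('a \<Rightarrow> rat)" where
  "bd2 B c = (\<lambda>w. \<Sum>p\<in>{p \<in> supp c. fst p + snd p = w}.
                   - c p * of_int (B (fst p) (snd p)))"

definition bd3 :: "('a::ab_group_add \<Rightarrow> 'a \<Rightarrow> int) \<Rightarrow> ('a \<times> 'a \<times> 'a \<Rightarrow> rat) \<Rightarrow> ('a \<times> 'a \<Rightarrow> rat)" where
  "bd3 B d = (\<lambda>(a, b). \<Sum>q\<in>supp d. (case q of (x1, x2, x3) \<Rightarrow>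
       d q * ( - (if x1 + x2 = a \<and> x3 = b then of_int (B x1 x2) else 0)
               + (if x1 + x3 = a \<and> x2 = b then of_int (B x1 x3) else 0)
               - (if x2 + x3 = a \<and> x1 = b then of_int (B x2 x3) else 0))))"

definition chain2_z :: "'a::ab_group_add \<Rightarrow> ('a \<times> 'a \<Rightarrow> rat) \<Rightarrow> bool" where
  "chain2_z z c \<longleftrightarrow> finite (supp c) \<and> (\<forall>(x, y)\<in>supp c. x + y = z)"

definition chain3_z :: "'a::ab_group_add \<Rightarrow> ('a \<times> 'a \<times> 'a \<Rightarrow> rat) \<Rightarrow> bool" where
  "chain3_z z d \<longleftrightarrow> finite (supp d) \<and> (\<forall>(x, y, w)\<in>supp d. x + y + w = z)"

definition H2_z_vanishes :: "('a::ab_group_add \<Rightarrow> 'a \<Rightarrow> int) \<Rightarrow> 'a \<Rightarrow> bool" where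
  "H2_z_vanishes B z \<longleftrightarrow>
     (\<forall>c. chain2_z z c \<and> bd2 B c = (\<lambda>_. 0) \<longrightarrow>
        (\<exists>d. chain3_z z d \<and> alt2 (bd3 B d) = alt2 c))"

end

theory Submission imports Defs begin

lemma bil:
  assumes "alt_bilinear B"
  shows "B (x+y) w = B x w + B y w" "B x (y+w) = B x y + B x w" "B x x = 0"
    "B y x = - B x y" "B (-x) w = - B x w" "B x (-w) = - B x w"
    "B (x - y) w = B x w - B y w" "B x (y - w) = B x y - B x w"
    "B 0 w = 0" "B x 0 = 0"
proof -
  have a: "\<And>x y w. B (x + y) w = B x w + B y w" and b: "\<And>x y w. B x (y + w) = B x y + B x w"
    and c: "\<And>x. B x x = 0" using assms unfolding alt_bilinear_def by auto
  show 1: "B (x+y) w = B x w + B y w" "B x (y+w) = B x y + B x w" "B x x = 0" using a b c by auto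
  have z1: "\<And>w. B 0 w = 0" using a[of 0 0] by simp
  have z2: "\<And>x. B x 0 = 0" using b[of _ 0 0] by simp
  show "B 0 w = 0" "B x 0 = 0" using z1 z2 by auto
  have "B (x+y) (x+y) = B x x + B x y + (B y x + B y y)" by (simp add: a b)
  then show "B y x = - B x y" using c by (simp add: algebra_simps)
  have n1: "\<And>x w. B (-x) w = - B x w" using a[of x "-x" for x] z1 by (metis add.right_inverse eq_neg_iff_add_eq_0)
  have n2: "\<And>x w. B x (-w) = - B x w" using b[of _ w "-w" for w] z2 by (metis add.right_inverse eq_neg_iff_add_eq_0)
  show "B (-x) w = - B x w" "B x (-w) = - B x w" using n1 n2 by auto
  show "B (x - y) w = B x w - B y w" using a[of x "-y"] n1 by simp
  show "B x (y - w) = B x y - B x w" using b[of x y "-w"] n2 by simp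
qed

definition Kf :: "('a::ab_group_add \<Rightarrow> 'a \<Rightarrow> int) \<Rightarrow> 'a \<times> 'a \<times> 'a \<Rightarrow> 'a \<Rightarrow> 'a \<Rightarrow> rat" where
  "Kf B q a b = (case q of (x1, x2, x3) \<Rightarrow>
       ( - (if x1 + x2 = a \<and> x3 = b then of_int (B x1 x2) else 0)
               + (if x1 + x3 = a \<and> x2 = b then of_int (B x1 x3) else 0)
               - (if x2 + x3 = a \<and> x1 = b then of_int (B x2 x3) else 0)))"

lemma bd3_eq: "bd3 B d (a, b) = (\<Sum>q\<in>supp d. d q * Kf B q a b)"
  unfolding bd3_def Kf_def by (auto intro!: sum.cong split: prod.split)

lemma bd3_sup: assumes "finite A" "supp d \<subseteq> A"
  shows "bd3 B d (a, b) = (\<Sum>q\<in>A. d q * Kf B q a b)"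
  unfolding bd3_eq using assms by (intro sum.mono_neutral_left) (auto simp: supp_def)

lemma bd3_add: assumes "finite (supp d1)" "finite (supp d2)"
  shows "bd3 B (\<lambda>q. d1 q + d2 q) p = bd3 B d1 p + bd3 B d2 p"
proof -
  obtain a b where p: "p = (a, b)" by force
  let ?A = "supp d1 \<union> supp d2"
  have f: "finite ?A" using assms by auto
  have s: "supp (\<lambda>q. d1 q + d2 q) \<subseteq> ?A" by (auto simp: supp_def)
  show ?thesis unfolding p
    using bd3_sup[OF f s, of B a b] bd3_sup[OF f, of d1 B a b] bd3_sup[OF f, of d2 B a b]
    by (simp add: distrib_right sum.distrib)
qed

lemma bd3_scale: assumes "finite (supp d)"
  shows "bd3 B (\<lambda>q. r * d q) p = r * bd3 B d p"
proof -
  obtain a b where p: "p = (a, b)" by force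
  have s: "supp (\<lambda>q. r * d q) \<subseteq> supp d" by (auto simp: supp_def)
  show ?thesis unfolding p
    using bd3_sup[OF assms s, of B a b] bd3_sup[OF assms order.refl, of B a b]
    by (simp add: sum_distrib_left mult.assoc)
qed

lemma bd3_zero: "bd3 B (\<lambda>q. 0) p = 0"
  by (cases p) (simp add: bd3_eq supp_def)

lemma alg: fixes tx ty m t0 ex ey exy e0 :: rat
  shows "(ty+m)*ex + (-tx+m)*ey + m*(-exy) = (ty+m)*(ex - tx/t0*e0) + (m-tx)*(ey - ty/t0*e0) - m*(exy - (tx+ty)/t0*e0)"
proof -
  have "(ty+m)*(tx/t0*e0) + (m-tx)*(ty/t0*e0) = m*((tx+ty)/t0*e0)"
    by (simp add: algebra_simps add_divide_distrib diff_divide_distrib)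
  then show ?thesis by (simp add: algebra_simps)
qed
lemma alg2: fixes s t1 tx a c d Dyz Dy1 :: rat assumes "tx \<noteq> 0"
shows "1 * ((s - t1) * ((t1 + s + tx) * a + s * Dyz - (s + tx) * d) + - (s + tx) * (s * c + (s - t1 - tx) * Dy1 - (s - t1) * d)) + - ((s + tx) * s / tx) * (tx * a - tx * c) = - (t1 * (t1 + tx)) * a + ((s - t1) * s * Dyz + - (s + tx) * (s - t1 - tx) * Dy1)"
proof -
  have "((s + tx) * s / tx) * (tx * a - tx * c) = (s + tx) * s * (a - c)"
    using assms by (simp add: field_simps)
  then show ?thesis by algebra
qed
lemma solve_alg: fixes R \<alpha> G F :: rat assumes "\<alpha> \<noteq> 0" "R = \<alpha> * G + F" shows "1 / \<alpha> * R + - 1 / \<alpha> * F = G"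
  using assms by (simp add: field_simps)

locale hsetup =
  fixes B :: "'a::ab_group_add \<Rightarrow> 'a \<Rightarrow> int" and z :: 'a and y0 :: 'a
  assumes ab: "alt_bilinear B" and nz: "B z y0 \<noteq> 0"
begin

definition bnd :: "('a \<times> 'a \<Rightarrow> rat) \<Rightarrow> bool" where
  "bnd f \<longleftrightarrow> (\<exists>d. chain3_z z d \<and> alt2 (bd3 B d) = f)"

lemma bnd_cong: "bnd f \<Longrightarrow> (\<And>p. f p = g p) \<Longrightarrow> bnd g"
proof -
  assume "bnd f" "\<And>p. f p = g p"
  then have "f = g" by auto
  with \<open>bnd f\<close> show ?thesis by simp
qed

lemma bnd_zero: "bnd (\<lambda>p. 0)"
  unfolding bnd_def
  by (rule exI[of _ "\<lambda>q. 0"]) (auto simp: chain3_z_def supp_def alt2_def bd3_zero)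

lemma bnd_add: assumes "bnd f" "bnd g" shows "bnd (\<lambda>p. f p + g p)"
proof -
  obtain d1 where d1: "chain3_z z d1" "alt2 (bd3 B d1) = f" using assms(1) bnd_def by auto
  obtain d2 where d2: "chain3_z z d2" "alt2 (bd3 B d2) = g" using assms(2) bnd_def by auto
  have fs: "finite (supp d1)" "finite (supp d2)" using d1 d2 by (auto simp: chain3_z_def)
  have c: "chain3_z z (\<lambda>q. d1 q + d2 q)"
  proof -
    have s: "supp (\<lambda>q. d1 q + d2 q) \<subseteq> supp d1 \<union> supp d2" by (auto simp: supp_def)
    then show ?thesis using d1(1) d2(1) fs unfolding chain3_z_def
      by (auto intro: finite_subset)
  qed
  have "alt2 (bd3 B (\<lambda>q. d1 q + d2 q)) = (\<lambda>p. f p + g p)"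
    unfolding d1(2)[symmetric] d2(2)[symmetric]
    by (auto simp: alt2_def bd3_add[OF fs])
  then show ?thesis using c bnd_def by auto
qed

lemma bnd_scale: assumes "bnd f" shows "bnd (\<lambda>p. r * f p)"
proof -
  obtain d1 where d1: "chain3_z z d1" "alt2 (bd3 B d1) = f" using assms(1) bnd_def by auto
  have fs: "finite (supp d1)" using d1 by (auto simp: chain3_z_def)
  have c: "chain3_z z (\<lambda>q. r * d1 q)"
  proof -
    have s: "supp (\<lambda>q. r * d1 q) \<subseteq> supp d1" by (auto simp: supp_def)
    then show ?thesis using d1(1) fs unfolding chain3_z_def
      by (auto intro: finite_subset)
  qed
  have "alt2 (bd3 B (\<lambda>q. r * d1 q)) = (\<lambda>p. r * f p)"
    unfolding d1(2)[symmetric]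
    by (auto simp: alt2_def bd3_scale[OF fs] algebra_simps)
  then show ?thesis using c bnd_def by auto
qed

lemma bnd_sum: assumes "finite A" "\<And>i. i \<in> A \<Longrightarrow> bnd (f i)"
  shows "bnd (\<lambda>p. \<Sum>i\<in>A. f i p)"
  using assms
proof (induction A rule: finite_induct)
  case empty then show ?case using bnd_zero by simp
next
  case (insert a F)
  have "bnd (\<lambda>p. f a p + (\<Sum>i\<in>F. f i p))" using insert by (intro bnd_add) auto
  then show ?case using insert by simp
qed

lemma bnd_lin: assumes "bnd f" "bnd g" shows "bnd (\<lambda>p. r * f p + q * g p)"
  using bnd_add[OF bnd_scale[OF assms(1)] bnd_scale[OF assms(2)]] .

definition ee :: "'a \<Rightarrow> 'a \<times> 'a \<Rightarrow> rat" where
  "ee w = (\<lambda>p. (if p = (w, z - w) then 1 else 0) - (if p = (z - w, w) then 1 else 0))"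

lemma ee_neg: "ee (z - w) p = - ee w p"
  unfolding ee_def by simp

lemma swap_eq: "((snd p, fst p) = (u, v)) = (p = (v, u))"
  by (cases p) auto

lemma lin: fixes A C D :: rat shows "(- (if P1 then A else 0) + (if P2 then C else 0) - (if P3 then D else 0)) -
   (- (if Q1 then A else 0) + (if Q2 then C else 0) - (if Q3 then D else 0)) =
   D * ((if Q3 then 1 else 0) - (if P3 then 1 else 0)) + (- C) * ((if Q2 then 1 else 0) - (if P2 then 1 else 0))
   + A * ((if Q1 then 1 else 0) - (if P1 then 1 else 0))"
  by (cases P1; cases P2; cases P3; cases Q1; cases Q2; cases Q3) simp_all

lemma bnd_triple: assumes "a + b + c = z"
  shows "bnd (\<lambda>p. of_int (B b c) * ee a p + of_int (B c a) * ee b p + of_int (B a b) * ee c p)"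
proof -
  let ?d = "\<lambda>q. if q = (a, b, c) then 1 else (0::rat)"
  have sd: "supp ?d = {(a, b, c)}" by (auto simp: supp_def)
  have ch: "chain3_z z ?d" unfolding chain3_z_def sd using assms by auto
  have za: "z - a = b + c" "z - b = a + c" "z - c = a + b" using assms[symmetric] by (auto simp: algebra_simps)
  have K: "bd3 B ?d p = - (if p = (a + b, c) then of_int (B a b) else 0)
               + (if p = (a + c, b) then of_int (B a c) else 0)
               - (if p = (b + c, a) then of_int (B b c) else 0)" for p
  proof -
    obtain p1 p2 where p: "p = (p1, p2)" by force
    have pe: "\<And>u v. ((p1, p2) = (u, v)) = (u = p1 \<and> v = p2)" by auto
    have "bd3 B ?d (p1, p2) = Kf B (a, b, c) p1 p2" by (simp add: bd3_eq sd)
    also have "\<dots> = - (if (p1, p2) = (a + b, c) then of_int (B a b) else 0)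
               + (if (p1, p2) = (a + c, b) then of_int (B a c) else 0)
               - (if (p1, p2) = (b + c, a) then of_int (B b c) else 0)"
      unfolding Kf_def prod.case pe by (rule refl)
    finally show ?thesis unfolding p .
  qed
  have al: "alt2 F p = F p - F (snd p, fst p)" for F :: "'a \<times> 'a \<Rightarrow> rat" and p
    by (cases p) (simp add: alt2_def)
  have ee2: "ee w p = (if p = (w, z - w) then 1 else 0) - (if (snd p, fst p) = (w, z - w) then 1 else 0)" for w p
    unfolding ee_def by (cases p) auto
  have eqf: "alt2 (bd3 B ?d) p = of_int (B b c) * ee a p + of_int (B c a) * ee b p + of_int (B a b) * ee c p" for p
    unfolding al K ee2 swap_eq za bil(4)[OF ab, of c a] of_int_minus by (rule lin)
  have "alt2 (bd3 B ?d) = (\<lambda>p. of_int (B b c) * ee a p + of_int (B c a) * ee b p + of_int (B a b) * ee c p)"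
    using eqf by (intro ext) (rule eqf)
  then show ?thesis unfolding bnd_def using ch by blast
qed

definition T :: "'a \<Rightarrow> rat" where "T w = of_int (B w z)"

lemmas bils = bil(1,2,3,5,6,7,8,9,10)[OF ab]

lemma T_add: "T (x + y) = T x + T y" unfolding T_def by (simp add: bils)
lemma T_z: "T z = 0" unfolding T_def by (simp add: bils)
lemma T_neg: "T (- x) = - T x" unfolding T_def by (simp add: bils)
lemma T_diff: "T (x - y) = T x - T y" unfolding T_def by (simp add: bils)
lemma T0: "T y0 \<noteq> 0" unfolding T_def using nz bil(4)[OF ab, of z y0] by simp

definition Dv :: "'a \<Rightarrow> 'a \<times> 'a \<Rightarrow> rat" where
  "Dv w = (\<lambda>p. ee w p - T w / T y0 * ee y0 p)"

lemma starD: "bnd (\<lambda>p. (T y + of_int (B x y)) * Dv x p + (of_int (B x y) - T x) * Dv y p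
     - of_int (B x y) * Dv (x + y) p)"
proof -
  have "x + y + (z - x - y) = z" by (simp add: algebra_simps)
  note tr = bnd_triple[OF this]
  have e: "ee (z - x - y) p = - ee (x + y) p" for p
    using ee_neg[of "x + y" p] by (simp add: diff_diff_eq)
  have c1: "B y (z - x - y) = B y z + B x y" using bil(4)[OF ab, of x y] by (simp add: bils algebra_simps)
  have c2: "B (z - x - y) x = - B x z + B x y" using bil(4)[OF ab, of x y] bil(4)[OF ab, of x z] by (simp add: bils algebra_simps)
  show ?thesis
  proof (rule bnd_cong[OF tr])
    fix p
    show "of_int (B y (z - x - y)) * ee x p + of_int (B (z - x - y) x) * ee y p + of_int (B x y) * ee (z - x - y) p =
      (T y + of_int (B x y)) * Dv x p + (of_int (B x y) - T x) * Dv y p - of_int (B x y) * Dv (x + y) p"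
      unfolding e c1 c2 Dv_def T_add unfolding T_def of_int_add of_int_minus by (rule alg)
  qed
qed

lemma solve: assumes "bnd R" "bnd F" "\<alpha> \<noteq> 0" "\<And>p. R p = \<alpha> * G p + F p"
  shows "bnd G"
proof (rule bnd_cong[OF bnd_lin[OF assms(1) assms(2), of "1/\<alpha>" "-1/\<alpha>"]])
  fix p show "1 / \<alpha> * R p + - 1 / \<alpha> * F p = G p" using assms(3) assms(4)[of p] by (rule solve_alg)
qed

lemma D_y0: "bnd (Dv y0)"
  by (rule bnd_cong[OF bnd_zero]) (simp add: Dv_def T0)

lemma D_neg_y0: "bnd (Dv (- y0))"
proof (rule solve[OF starD[of "- y0" y0] bnd_scale[OF D_y0, of "- T y0"]])
  show "- T y0 \<noteq> 0" using T0 by simp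
  fix p show "(T (- y0) + of_int (B y0 (- y0))) * Dv y0 p + (of_int (B y0 (- y0)) - T y0) * Dv (- y0) p -
         of_int (B y0 (- y0)) * Dv (y0 + - y0) p = - T y0 * Dv (- y0) p + - T y0 * Dv y0 p"
    by (simp add: bils T_neg)
qed

lemma mainL: assumes D1: "bnd (Dv y1)" and t1: "T y1 \<noteq> 0" and tx: "T x \<noteq> 0" and tt: "T x + T y1 \<noteq> 0"
  shows "bnd (Dv x)"
proof -
  have Dyz: "bnd (Dv (y1 + z))"
  proof (rule solve[OF starD[where x = y1 and y = z] bnd_scale[OF D1, of "T y1"]])
    show "- T y1 \<noteq> 0" using t1 by simp
    fix p show "(T z + of_int (B y1 z)) * Dv y1 p + (of_int (B y1 z) - T y1) * Dv z p - of_int (B y1 z) * Dv (y1 + z) p =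
         - T y1 * Dv (y1 + z) p + T y1 * Dv y1 p"
      by (simp add: T_z T_def bils)
  qed
  define s where "s = (of_int (B x y1) :: rat)"
  define a where "a = Dv x"
  define c where "c = Dv (x + z)"
  define d where "d = Dv (x + (y1 + z))"
  have eq: "x + z + y1 = x + (y1 + z)" by (simp add: algebra_simps)
  have m4: "of_int (B x (y1 + z)) = s + T x" unfolding s_def T_def by (simp add: bils)
  have m5: "of_int (B (x + z) y1) = s - T y1" unfolding s_def T_def using bil(4)[OF ab, of y1 z]
    by (simp add: bils)
  have R2: "bnd (\<lambda>p. T x * a p - T x * c p)"
    by (rule bnd_cong[OF starD[where x = x and y = z]]) (simp add: T_z T_def a_def c_def bils)
  have R4: "bnd (\<lambda>p. (T y1 + s + T x) * a p + s * Dv (y1 + z) p - (s + T x) * d p)"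
    by (rule bnd_cong[OF starD[where x = x and y = "y1 + z"]]) (simp add: m4 T_add T_z a_def d_def)
  have R5: "bnd (\<lambda>p. s * c p + (s - T y1 - T x) * Dv y1 p - (s - T y1) * d p)"
    by (rule bnd_cong[OF starD[where x = "x + z" and y = y1]]) (simp add: m5 T_add T_z c_def d_def eq)
  have RC: "bnd (\<lambda>p. (s - T y1) * ((T y1 + s + T x) * a p + s * Dv (y1 + z) p - (s + T x) * d p)
      + (- (s + T x)) * (s * c p + (s - T y1 - T x) * Dv y1 p - (s - T y1) * d p))"
    by (rule bnd_lin[OF R4 R5])
  have RC2: "bnd (\<lambda>p. 1 * ((s - T y1) * ((T y1 + s + T x) * a p + s * Dv (y1 + z) p - (s + T x) * d p)
      + (- (s + T x)) * (s * c p + (s - T y1 - T x) * Dv y1 p - (s - T y1) * d p))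
      + (- ((s + T x) * s / T x)) * (T x * a p - T x * c p))"
    by (rule bnd_lin[OF RC R2])
  have F: "bnd (\<lambda>p. (s - T y1) * s * Dv (y1 + z) p + (- (s + T x) * (s - T y1 - T x)) * Dv y1 p)"
    by (rule bnd_lin[OF Dyz D1])
  show ?thesis unfolding a_def[symmetric]
  proof (rule solve[OF RC2 F])
    show "- (T y1 * (T y1 + T x)) \<noteq> 0" using t1 tt by (simp add: add.commute)
    fix p show "1 * ((s - T y1) * ((T y1 + s + T x) * a p + s * Dv (y1 + z) p - (s + T x) * d p) +
              - (s + T x) * (s * c p + (s - T y1 - T x) * Dv y1 p - (s - T y1) * d p)) +
         - ((s + T x) * s / T x) * (T x * a p - T x * c p) =
         - (T y1 * (T y1 + T x)) * a p +
         ((s - T y1) * s * Dv (y1 + z) p + - (s + T x) * (s - T y1 - T x) * Dv y1 p)"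
      by (rule alg2[OF tx])
  qed
qed

lemma Dnz: assumes "T x \<noteq> 0" shows "bnd (Dv x)"
proof (cases "T x + T y0 = 0")
  case False then show ?thesis using mainL[OF D_y0 T0 assms] by simp
next
  case True
  show ?thesis
  proof (rule mainL[OF D_neg_y0 _ assms])
    show "T (- y0) \<noteq> 0" using T0 by (simp add: T_neg)
    show "T x + T (- y0) \<noteq> 0" using True T0 by (simp add: T_neg)
  qed
qed

lemma Dall: "bnd (Dv x)"
proof (cases "T x = 0")
  case False then show ?thesis using Dnz by simp
next
  case Tx: True
  define s where "s = (of_int (B x y0) :: rat)"
  show ?thesis
  proof (cases "s = 0")
    case True
    show ?thesis
    proof (rule solve[OF starD[where x = x and y = y0] bnd_zero])
      show "T y0 \<noteq> 0" by (rule T0)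
      fix p show "(T y0 + of_int (B x y0)) * Dv x p + (of_int (B x y0) - T x) * Dv y0 p - of_int (B x y0) * Dv (x + y0) p =
         T y0 * Dv x p + 0" using True Tx by (simp add: s_def)
    qed
  next
    case sn: False
    show ?thesis
    proof (cases "T y0 + s = 0")
      case False
      have Dxy: "bnd (Dv (x + y0))" by (rule Dnz) (simp add: T_add Tx T0)
      show ?thesis
      proof (rule solve[OF starD[where x = x and y = y0] bnd_lin[OF D_y0 Dxy, of s "- s"]])
        show "T y0 + s \<noteq> 0" by (rule False)
        fix p show "(T y0 + of_int (B x y0)) * Dv x p + (of_int (B x y0) - T x) * Dv y0 p - of_int (B x y0) * Dv (x + y0) p =
         (T y0 + s) * Dv x p + (s * Dv y0 p + - s * Dv (x + y0) p)" using Tx by (simp add: s_def)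
      qed
    next
      case True
      have Dxy: "bnd (Dv (x - y0))" by (rule Dnz) (simp add: T_diff Tx T0)
      have m: "of_int (B (x - y0) y0) = s" unfolding s_def by (simp add: bils)
      show ?thesis
      proof (rule solve[OF starD[where x = "x - y0" and y = y0] bnd_lin[OF Dxy D_y0, of "T y0 + s" "s - T (x - y0)"]])
        show "- s \<noteq> 0" using sn by simp
        fix p show "(T y0 + of_int (B (x - y0) y0)) * Dv (x - y0) p + (of_int (B (x - y0) y0) - T (x - y0)) * Dv y0 p -
         of_int (B (x - y0) y0) * Dv (x - y0 + y0) p =
         - s * Dv x p + ((T y0 + s) * Dv (x - y0) p + (s - T (x - y0)) * Dv y0 p)"
          unfolding m by simp
      qed
    qed
  qed
qed

lemma cycle_bnd: assumes ch: "chain2_z z c" and cy: "bd2 B c = (\<lambda>_. 0)"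
  shows "bnd (alt2 c)"
proof -
  have fin: "finite (supp c)" and sz: "\<And>q. q \<in> supp c \<Longrightarrow> snd q = z - fst q"
    using ch unfolding chain2_z_def by (auto simp: algebra_simps eq_diff_eq)
  have set: "{p \<in> supp c. fst p + snd p = z} = supp c" using ch unfolding chain2_z_def by auto
  have "bd2 B c z = 0" using cy by simp
  then have "(\<Sum>q\<in>supp c. - c q * T (fst q)) = 0"
    unfolding bd2_def set
  proof -
    assume h: "(\<Sum>p\<in>supp c. - c p * of_int (B (fst p) (snd p))) = 0"
    have "(\<Sum>p\<in>supp c. - c p * of_int (B (fst p) (snd p))) = (\<Sum>q\<in>supp c. - c q * T (fst q))"
      by (rule sum.cong) (auto simp: sz T_def bils)
    then show ?thesis using h by simp
  qed
  then have sumT: "(\<Sum>q\<in>supp c. c q * T (fst q)) = 0"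
    by (simp add: sum_negf)
  have A: "alt2 c p = (\<Sum>q\<in>supp c. c q * ee (fst q) p)" for p
  proof -
    obtain p1 p2 where p: "p = (p1, p2)" by force
    have e: "c q * ee (fst q) p = (if q = p then c q else 0) - (if q = (p2, p1) then c q else 0)"
      if "q \<in> supp c" for q
    proof -
      have "q = (fst q, z - fst q)" using sz[OF that] by (metis prod.collapse)
      then show ?thesis unfolding ee_def p by (cases q) auto
    qed
    have "(\<Sum>q\<in>supp c. c q * ee (fst q) p) =
       (\<Sum>q\<in>supp c. (if q = p then c q else 0)) - (\<Sum>q\<in>supp c. (if q = (p2, p1) then c q else 0))"
      using e by (simp add: sum_subtractf[symmetric])
    also have "\<dots> = c p - c (p2, p1)"
      using fin by (simp add: sum.delta' supp_def)
    finally show ?thesis unfolding p alt2_def by simp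
  qed
  have B: "alt2 c p = (\<Sum>q\<in>supp c. c q * Dv (fst q) p)" for p
  proof -
    have "(\<Sum>q\<in>supp c. c q * Dv (fst q) p) =
       (\<Sum>q\<in>supp c. c q * ee (fst q) p - (c q * T (fst q)) * (ee y0 p / T y0))"
      unfolding Dv_def by (intro sum.cong) (auto simp: algebra_simps)
    also have "\<dots> = (\<Sum>q\<in>supp c. c q * ee (fst q) p) - (\<Sum>q\<in>supp c. c q * T (fst q)) * (ee y0 p / T y0)"
      by (simp only: sum_subtractf sum_distrib_right)
    finally have "(\<Sum>q\<in>supp c. c q * Dv (fst q) p) =
       (\<Sum>q\<in>supp c. c q * ee (fst q) p) - (\<Sum>q\<in>supp c. c q * T (fst q)) * (ee y0 p / T y0)" .
    then show ?thesis unfolding A[of p] sumT by simp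
  qed
  have "bnd (\<lambda>p. \<Sum>q\<in>supp c. c q * Dv (fst q) p)"
    using fin by (rule bnd_sum) (rule bnd_scale, rule Dall)
  then show ?thesis by (rule bnd_cong) (rule B[symmetric])
qed

end

theorem proposition4p1:
  fixes B :: "'a::ab_group_add \<Rightarrow> 'a \<Rightarrow> int" and z :: 'a
  assumes "alt_bilinear B"
    and "\<exists>y. B z y \<noteq> 0"
  shows "H2_z_vanishes B z"
proof -
  obtain y where y: "B z y \<noteq> 0" using assms(2) by blast
  interpret hsetup B z y using assms(1) y by unfold_locales
  show ?thesis unfolding H2_z_vanishes_def
  proof (intro allI impI)
    fix c assume "chain2_z z c \<and> bd2 B c = (\<lambda>_. 0)"
    then have "bnd (alt2 c)" using cycle_bnd by blast
    then show "\<exists>d. chain3_z z d \<and> alt2 (bd3 B d) = alt2 c" unfolding bnd_def by blast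
  qed
qed

end
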